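(* Let $R$, $G$, $*$, $\sigma$ and $\mathcal{S}$ be as in the context, and suppose $\mathcal{S}$ is anticommutative. For all $x,y\in G\setminus G_*$: - (i) $xy\in\{yx,\ yx^*,\ y^*x,\ x^*y^*\}$; - (ii) $xy=yx$ if and only if $xy\in G_*$; - (iii) $xy=yx^*$ if and only if $x^*y=yx$.
   Context: Throughout, $R$ is a commutative ring with unity with $\operatorname{char}(R)\neq 2$, and $\mathcal{U}(R)$ is its unit group. $G$ is a group with an involution $*$, i.e. a map $x\mapsto x^*$ with $(xy)^*=y^*x^*$ and $(x^* )^*=x$. The map $\sigma:G\to\mathcal{U}(R)$ is a nontrivial group homomorphism with kernel $N=\ker\sigma$, and it is compatible with $*$: $xx^*\in N$ for all $x\in G$. The group ring $RG$ carries the involution $\left(\sum_{x\in G}\alpha_x x\right)^{\sigma*}=\sum_{x\in G}\sigma(x)\alpha_x x^*$. Write $G_*=\{x\in G: x^*=x\}$ and $N_*=G_*\cap N$. Let $\mathcal{S}$ be the $R$-submodule of $RG$ spanned by the union of the following three sets: - $2\mathcal{S}_1=\{2x: x\in N_*\}$; - $\mathcal{S}_2=\{\alpha x: x\in G_*\setminus N,\ \alpha\in R,\ \alpha(1-\sigma(x))=0\}$; - $\mathcal{S}_3=\{x+\sigma(x)x^*: x\in G\setminus G_*\}$. $\mathcal{S}$ is called anticommutative if $ab+ba=0$ for all $a,b\in\mathcal{S}$. *)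

theory Defs
  imports "HOL-Algebra.Group"
begin

text \<open>The group ring RG is modelled as functions from the group carrier to R
(value 0 outside the carrier); elements of the spanned submodule have finite support.\<close>

definition gr_basis :: "'g \<Rightarrow> 'r::comm_ring_1 \<Rightarrow> ('g \<Rightarrow> 'r)" where
  "gr_basis x c = (\<lambda>z. if z = x then c else 0)"

definition gr_add :: "('g \<Rightarrow> 'r::comm_ring_1) \<Rightarrow> ('g \<Rightarrow> 'r) \<Rightarrow> ('g \<Rightarrow> 'r)" where
  "gr_add a b = (\<lambda>z. a z + b z)"

definition gr_smult :: "'r::comm_ring_1 \<Rightarrow> ('g \<Rightarrow> 'r) \<Rightarrow> ('g \<Rightarrow> 'r)" where
  "gr_smult c a = (\<lambda>z. c * a z)"

definition gr_mult :: "('g, 'b) monoid_scheme \<Rightarrow> ('g \<Rightarrow> 'r::comm_ring_1) \<Rightarrow> ('g \<Rightarrow> 'r) \<Rightarrow> ('g \<Rightarrow> 'r)" where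
  "gr_mult G a b = (\<lambda>z. if z \<in> carrier G
      then (\<Sum>x\<in>{x \<in> carrier G. a x \<noteq> 0}. a x * b (inv\<^bsub>G\<^esub> x \<otimes>\<^bsub>G\<^esub> z)) else 0)"

definition S_gens :: "('g, 'b) monoid_scheme \<Rightarrow> ('g \<Rightarrow> 'g) \<Rightarrow> ('g \<Rightarrow> 'r::comm_ring_1) \<Rightarrow> ('g \<Rightarrow> 'r) set" where
  "S_gens G star \<sigma> =
     {gr_basis x 2 | x. x \<in> carrier G \<and> star x = x \<and> \<sigma> x = 1}
   \<union> {gr_basis x \<alpha> | x \<alpha>. x \<in> carrier G \<and> star x = x \<and> \<sigma> x \<noteq> 1 \<and> \<alpha> * (1 - \<sigma> x) = 0}
   \<union> {gr_add (gr_basis x 1) (gr_basis (star x) (\<sigma> x)) | x. x \<in> carrier G \<and> star x \<noteq> x}"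

inductive_set S_span :: "('g, 'b) monoid_scheme \<Rightarrow> ('g \<Rightarrow> 'g) \<Rightarrow> ('g \<Rightarrow> 'r::comm_ring_1) \<Rightarrow> ('g \<Rightarrow> 'r) set"
  for G star \<sigma> where
  zero: "(\<lambda>_. 0) \<in> S_span G star \<sigma>"
| gen: "a \<in> S_gens G star \<sigma> \<Longrightarrow> a \<in> S_span G star \<sigma>"
| add: "a \<in> S_span G star \<sigma> \<Longrightarrow> b \<in> S_span G star \<sigma> \<Longrightarrow> gr_add a b \<in> S_span G star \<sigma>"
| smult: "a \<in> S_span G star \<sigma> \<Longrightarrow> gr_smult c a \<in> S_span G star \<sigma>"

definition S_anticomm :: "('g, 'b) monoid_scheme \<Rightarrow> ('g \<Rightarrow> 'g) \<Rightarrow> ('g \<Rightarrow> 'r::comm_ring_1) \<Rightarrow> bool" where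
  "S_anticomm G star \<sigma> \<longleftrightarrow>
     (\<forall>a\<in>S_span G star \<sigma>. \<forall>b\<in>S_span G star \<sigma>.
        gr_add (gr_mult G a b) (gr_mult G b a) = (\<lambda>_. 0))"

end

theory Submission
  imports Defs
begin

context group begin

lemma gm_sum:
  assumes "finite T" "T \<subseteq> carrier G" "\<And>z. z \<in> carrier G \<Longrightarrow> a z \<noteq> 0 \<Longrightarrow> z \<in> T"
    "p \<in> carrier G"
  shows "gr_mult G a b p = (\<Sum>x\<in>T. a x * b (inv x \<otimes> p))"
proof -
  have "(\<Sum>x\<in>{x \<in> carrier G. a x \<noteq> 0}. a x * b (inv x \<otimes> p)) = (\<Sum>x\<in>T. a x * b (inv x \<otimes> p))"
    by (rule sum.mono_neutral_left) (use assms in auto)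
  thus ?thesis using assms(4) by (simp add: gr_mult_def)
qed

lemma gm_pair:
  assumes "u \<in> carrier G" "u' \<in> carrier G" "v \<in> carrier G" "v' \<in> carrier G" "p \<in> carrier G"
  shows "gr_mult G (gr_add (gr_basis u c1) (gr_basis u' c2)) (gr_add (gr_basis v d1) (gr_basis v' d2)) p =
    c1 * ((if p = u \<otimes> v then d1 else 0) + (if p = u \<otimes> v' then d2 else 0))
  + c2 * ((if p = u' \<otimes> v then d1 else 0) + (if p = u' \<otimes> v' then d2 else 0))"
proof -
  have e: "gr_mult G (gr_add (gr_basis u c1) (gr_basis u' c2)) (gr_add (gr_basis v d1) (gr_basis v' d2)) p
     = (\<Sum>x\<in>{u,u'}. (gr_add (gr_basis u c1) (gr_basis u' c2)) x * (gr_add (gr_basis v d1) (gr_basis v' d2)) (inv x \<otimes> p))"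
    by (rule gm_sum) (use assms in \<open>auto simp: gr_add_def gr_basis_def split: if_splits\<close>)
  have i: "\<And>w q. w \<in> carrier G \<Longrightarrow> q \<in> carrier G \<Longrightarrow> (inv w \<otimes> p = q) = (p = w \<otimes> q)"
    using assms(5) by (simp add: inv_solve_left')
  show ?thesis
  proof (cases "u = u'")
    case True
    then show ?thesis unfolding e using assms
      by (simp add: gr_add_def gr_basis_def i algebra_simps)
  next
    case False
    then show ?thesis unfolding e using assms
      by (simp add: gr_add_def gr_basis_def i algebra_simps)
  qed
qed

end

theorem lemma3p7:
  fixes G :: "('g, 'b) monoid_scheme"
    and star :: "'g \<Rightarrow> 'g"
    and \<sigma> :: "'g \<Rightarrow> 'r::comm_ring_1"
    and x y :: 'g
  assumes grp: "group G"
    and char: "(2::'r) \<noteq> 0"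
    and star_closed: "\<forall>u\<in>carrier G. star u \<in> carrier G"
    and star_mult: "\<forall>u\<in>carrier G. \<forall>v\<in>carrier G. star (u \<otimes>\<^bsub>G\<^esub> v) = star v \<otimes>\<^bsub>G\<^esub> star u"
    and star_star: "\<forall>u\<in>carrier G. star (star u) = u"
    and \<sigma>_unit: "\<forall>u\<in>carrier G. \<sigma> u dvd 1"
    and \<sigma>_hom: "\<forall>u\<in>carrier G. \<forall>v\<in>carrier G. \<sigma> (u \<otimes>\<^bsub>G\<^esub> v) = \<sigma> u * \<sigma> v"
    and \<sigma>_nontriv: "\<exists>u\<in>carrier G. \<sigma> u \<noteq> 1"
    and compat: "\<forall>u\<in>carrier G. \<sigma> (u \<otimes>\<^bsub>G\<^esub> star u) = 1"
    and anti: "S_anticomm G star \<sigma>"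
    and x: "x \<in> carrier G" "star x \<noteq> x"
    and y: "y \<in> carrier G" "star y \<noteq> y"
  shows "x \<otimes>\<^bsub>G\<^esub> y \<in> {y \<otimes>\<^bsub>G\<^esub> x, y \<otimes>\<^bsub>G\<^esub> star x, star y \<otimes>\<^bsub>G\<^esub> x, star x \<otimes>\<^bsub>G\<^esub> star y}
     \<and> (x \<otimes>\<^bsub>G\<^esub> y = y \<otimes>\<^bsub>G\<^esub> x \<longleftrightarrow> star (x \<otimes>\<^bsub>G\<^esub> y) = x \<otimes>\<^bsub>G\<^esub> y)
     \<and> (x \<otimes>\<^bsub>G\<^esub> y = y \<otimes>\<^bsub>G\<^esub> star x \<longleftrightarrow> star x \<otimes>\<^bsub>G\<^esub> y = y \<otimes>\<^bsub>G\<^esub> x)"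
proof -
  interpret group G by (rule grp)
  have sc: "\<And>u. u \<in> carrier G \<Longrightarrow> star u \<in> carrier G" using star_closed by blast
  have sm: "\<And>u v. u \<in> carrier G \<Longrightarrow> v \<in> carrier G \<Longrightarrow> star (u \<otimes>\<^bsub>G\<^esub> v) = star v \<otimes>\<^bsub>G\<^esub> star u"
    using star_mult by blast
  have ss: "\<And>u. u \<in> carrier G \<Longrightarrow> star (star u) = u" using star_star by blast
  have sh: "\<And>u v. u \<in> carrier G \<Longrightarrow> v \<in> carrier G \<Longrightarrow> \<sigma> (u \<otimes>\<^bsub>G\<^esub> v) = \<sigma> u * \<sigma> v"
    using \<sigma>_hom by blast
  have one0: "(1::'r) \<noteq> 0" using char by (metis mult_zero_left one_add_one mult_2 add_0)
  have unz: "\<And>u. u \<in> carrier G \<Longrightarrow> \<sigma> u \<noteq> 0"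
    using \<sigma>_unit one0 by fastforce
  have cp: "\<And>u. u \<in> carrier G \<Longrightarrow> \<sigma> u * \<sigma> (star u) = 1"
    using compat sh sc by metis
  have s1: "star \<one>\<^bsub>G\<^esub> = \<one>\<^bsub>G\<^esub>"
  proof -
    have "star \<one>\<^bsub>G\<^esub> = star \<one>\<^bsub>G\<^esub> \<otimes>\<^bsub>G\<^esub> star (star \<one>\<^bsub>G\<^esub>)" by (simp add: ss sc)
    also have "\<dots> = star (star \<one>\<^bsub>G\<^esub> \<otimes>\<^bsub>G\<^esub> \<one>\<^bsub>G\<^esub>)" by (rule sm[symmetric]) (simp_all add: sc)
    also have "\<dots> = \<one>\<^bsub>G\<^esub>" by (simp add: ss sc)
    finally show ?thesis .
  qed
  have sig1: "\<sigma> \<one>\<^bsub>G\<^esub> = 1"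
  proof -
    have "\<sigma> \<one>\<^bsub>G\<^esub> * \<sigma> \<one>\<^bsub>G\<^esub> = \<sigma> \<one>\<^bsub>G\<^esub> * 1" using sh[of "\<one>\<^bsub>G\<^esub>" "\<one>\<^bsub>G\<^esub>"] by simp
    moreover obtain k where k: "1 = \<sigma> \<one>\<^bsub>G\<^esub> * k" using \<sigma>_unit one_closed by (meson dvdE)
    ultimately have "\<sigma> \<one>\<^bsub>G\<^esub> * \<sigma> \<one>\<^bsub>G\<^esub> * k = \<sigma> \<one>\<^bsub>G\<^esub> * 1 * k" by simp
    thus ?thesis using k by (simp add: mult.assoc)
  qed
  define A where "A u = gr_add (gr_basis u (1::'r)) (gr_basis (star u) (\<sigma> u))" for u
  have AS: "\<And>u. u \<in> carrier G \<Longrightarrow> star u \<noteq> u \<Longrightarrow> A u \<in> S_span G star \<sigma>"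
    unfolding A_def by (rule S_span.gen) (auto simp: S_gens_def)
  have b2: "gr_basis z (2::'r) = gr_add (gr_basis z 1) (gr_basis z 1)" for z
    by (auto simp: gr_basis_def gr_add_def)
  have ZS: "\<And>z. z \<in> carrier G \<Longrightarrow> star z = z \<Longrightarrow> \<sigma> z = 1 \<or> 2 * (1 - \<sigma> z) = 0 \<Longrightarrow> gr_basis z (2::'r) \<in> S_span G star \<sigma>"
  proof -
    fix z assume h: "z \<in> carrier G" "star z = z" "\<sigma> z = 1 \<or> 2 * (1 - \<sigma> z) = (0::'r)"
    show "gr_basis z (2::'r) \<in> S_span G star \<sigma>"
    proof (rule S_span.gen, cases "\<sigma> z = 1")
      case True
      then show "gr_basis z 2 \<in> S_gens G star \<sigma>" using h unfolding S_gens_def by blast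
    next
      case False
      then have "2 * (1 - \<sigma> z) = (0::'r)" using h by blast
      then show "gr_basis z 2 \<in> S_gens G star \<sigma>" using h False unfolding S_gens_def by blast
    qed
  qed
  have AC: "\<And>a b p. a \<in> S_span G star \<sigma> \<Longrightarrow> b \<in> S_span G star \<sigma> \<Longrightarrow> gr_mult G a b p + gr_mult G b a p = 0"
    using anti unfolding S_anticomm_def gr_add_def by metis
  have E: "\<And>u v p. u \<in> carrier G \<Longrightarrow> star u \<noteq> u \<Longrightarrow> v \<in> carrier G \<Longrightarrow> star v \<noteq> v \<Longrightarrow> p \<in> carrier G \<Longrightarrow>
    1 * ((if p = u \<otimes>\<^bsub>G\<^esub> v then 1 else 0) + (if p = u \<otimes>\<^bsub>G\<^esub> star v then \<sigma> v else 0))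
  + \<sigma> u * ((if p = star u \<otimes>\<^bsub>G\<^esub> v then 1 else 0) + (if p = star u \<otimes>\<^bsub>G\<^esub> star v then \<sigma> v else 0))
  + (1 * ((if p = v \<otimes>\<^bsub>G\<^esub> u then 1 else 0) + (if p = v \<otimes>\<^bsub>G\<^esub> star u then \<sigma> u else 0))
  + \<sigma> v * ((if p = star v \<otimes>\<^bsub>G\<^esub> u then 1 else 0) + (if p = star v \<otimes>\<^bsub>G\<^esub> star u then \<sigma> u else 0))) = 0"
  proof -
    fix u v p assume h: "u \<in> carrier G" "star u \<noteq> u" "v \<in> carrier G" "star v \<noteq> v" "p \<in> carrier G"
    have "gr_mult G (A u) (A v) p + gr_mult G (A v) (A u) p = 0" using AC AS h by blast
    thus "?thesis u v p" unfolding A_def using h by (simp only: gm_pair sc)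
  qed
  have Z: "\<And>z u p. z \<in> carrier G \<Longrightarrow> gr_basis z 2 \<in> S_span G star \<sigma> \<Longrightarrow> u \<in> carrier G \<Longrightarrow> star u \<noteq> u \<Longrightarrow> p \<in> carrier G \<Longrightarrow>
    1 * ((if p = z \<otimes>\<^bsub>G\<^esub> u then 1 else 0) + (if p = z \<otimes>\<^bsub>G\<^esub> star u then \<sigma> u else 0))
  + 1 * ((if p = z \<otimes>\<^bsub>G\<^esub> u then 1 else 0) + (if p = z \<otimes>\<^bsub>G\<^esub> star u then \<sigma> u else 0))
  + (1 * ((if p = u \<otimes>\<^bsub>G\<^esub> z then 1 else 0) + (if p = u \<otimes>\<^bsub>G\<^esub> z then 1 else 0))
  + \<sigma> u * ((if p = star u \<otimes>\<^bsub>G\<^esub> z then 1 else 0) + (if p = star u \<otimes>\<^bsub>G\<^esub> z then 1 else 0))) = 0"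
  proof -
    fix z u p assume h: "z \<in> carrier G" "gr_basis z 2 \<in> S_span G star \<sigma>" "u \<in> carrier G" "star u \<noteq> u" "p \<in> carrier G"
    have "gr_mult G (gr_basis z 2) (A u) p + gr_mult G (A u) (gr_basis z 2) p = 0" using AC AS h by blast
    thus "?thesis z u p" unfolding A_def b2 using h by (simp only: gm_pair sc)
  qed
  have xs: "star x \<in> carrier G" "star (star x) = x" using x sc ss by auto
  have ys: "star y \<in> carrier G" "star (star y) = y" using y sc ss by auto
  have four: "(4::'r) = 0"
  proof -
    have "gr_basis \<one>\<^bsub>G\<^esub> (2::'r) \<in> S_span G star \<sigma>" by (rule ZS) (simp_all add: s1 sig1)
    from Z[OF one_closed this x(1) x(2) x(1)] have "(1 + 1) + (1 + 1) = (0::'r)"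
      using x xs by simp
    thus ?thesis by simp
  qed
  have Sym: "\<And>u v. u \<in> carrier G \<Longrightarrow> star u \<noteq> u \<Longrightarrow> v \<in> carrier G \<Longrightarrow>
     gr_basis (u \<otimes>\<^bsub>G\<^esub> v) 2 \<in> S_span G star \<sigma> \<Longrightarrow>
     u \<otimes>\<^bsub>G\<^esub> v = v \<otimes>\<^bsub>G\<^esub> u \<or> u \<otimes>\<^bsub>G\<^esub> v = v \<otimes>\<^bsub>G\<^esub> star u"
  proof (rule ccontr)
    fix u v assume h: "u \<in> carrier G" "star u \<noteq> u" "v \<in> carrier G" "gr_basis (u \<otimes>\<^bsub>G\<^esub> v) 2 \<in> S_span G star \<sigma>"
      and n: "\<not> (u \<otimes>\<^bsub>G\<^esub> v = v \<otimes>\<^bsub>G\<^esub> u \<or> u \<otimes>\<^bsub>G\<^esub> v = v \<otimes>\<^bsub>G\<^esub> star u)"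
    have su: "star u \<in> carrier G" using h sc by auto
    from Z[OF _ h(4) h(1) h(2), of "u \<otimes>\<^bsub>G\<^esub> (u \<otimes>\<^bsub>G\<^esub> v)"] 
    have "(1 + 1) = (0::'r)" using h n su by (simp add: m_assoc)
    thus False using char by simp
  qed
  have I: "\<And>u v. u \<in> carrier G \<Longrightarrow> star u \<noteq> u \<Longrightarrow> v \<in> carrier G \<Longrightarrow> star v \<noteq> v \<Longrightarrow>
     u \<otimes>\<^bsub>G\<^esub> v = v \<otimes>\<^bsub>G\<^esub> u \<or> u \<otimes>\<^bsub>G\<^esub> v = v \<otimes>\<^bsub>G\<^esub> star u \<or>
     u \<otimes>\<^bsub>G\<^esub> v = star v \<otimes>\<^bsub>G\<^esub> u \<or> u \<otimes>\<^bsub>G\<^esub> v = star u \<otimes>\<^bsub>G\<^esub> star v"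
  proof (rule ccontr)
    fix u v assume h: "u \<in> carrier G" "star u \<noteq> u" "v \<in> carrier G" "star v \<noteq> v"
      and n: "\<not> (u \<otimes>\<^bsub>G\<^esub> v = v \<otimes>\<^bsub>G\<^esub> u \<or> u \<otimes>\<^bsub>G\<^esub> v = v \<otimes>\<^bsub>G\<^esub> star u \<or>
     u \<otimes>\<^bsub>G\<^esub> v = star v \<otimes>\<^bsub>G\<^esub> u \<or> u \<otimes>\<^bsub>G\<^esub> v = star u \<otimes>\<^bsub>G\<^esub> star v)"
    have su: "star u \<in> carrier G" and sv: "star v \<in> carrier G" using h sc by auto
    have d1: "u \<otimes>\<^bsub>G\<^esub> v \<noteq> u \<otimes>\<^bsub>G\<^esub> star v" and d2: "u \<otimes>\<^bsub>G\<^esub> v \<noteq> star u \<otimes>\<^bsub>G\<^esub> v"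
      using h su sv by auto
    note e = E[OF h(1-4) m_closed[OF h(1) h(3)]]
    show False
    proof (cases "u \<otimes>\<^bsub>G\<^esub> v = star v \<otimes>\<^bsub>G\<^esub> star u")
      case False
      then show False using e n d1 d2 one0 by simp
    next
      case True
      then have "1 + \<sigma> v * \<sigma> u = 0" using e n d1 d2 by simp
      then have st: "\<sigma> u * \<sigma> v = - 1" by (simp add: algebra_simps eq_neg_iff_add_eq_0)
      have sz: "star (u \<otimes>\<^bsub>G\<^esub> v) = u \<otimes>\<^bsub>G\<^esub> v" using True sm[OF h(1) h(3)] by simp
      have "\<sigma> (u \<otimes>\<^bsub>G\<^esub> v) = -1" using st sh h by simp
      then have "2 * (1 - \<sigma> (u \<otimes>\<^bsub>G\<^esub> v)) = 0" using four by simp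
      then have "gr_basis (u \<otimes>\<^bsub>G\<^esub> v) 2 \<in> S_span G star \<sigma>" using ZS sz h by simp
      then show False using Sym[OF h(1,2,3)] n by blast
    qed
  qed
  have III: "\<And>u v. u \<in> carrier G \<Longrightarrow> star u \<noteq> u \<Longrightarrow> v \<in> carrier G \<Longrightarrow> star v \<noteq> v \<Longrightarrow>
     u \<otimes>\<^bsub>G\<^esub> v = v \<otimes>\<^bsub>G\<^esub> star u \<Longrightarrow> star u \<otimes>\<^bsub>G\<^esub> v = v \<otimes>\<^bsub>G\<^esub> u"
  proof (rule ccontr)
    fix u v assume h: "u \<in> carrier G" "star u \<noteq> u" "v \<in> carrier G" "star v \<noteq> v"
      and H: "u \<otimes>\<^bsub>G\<^esub> v = v \<otimes>\<^bsub>G\<^esub> star u"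
      and n: "star u \<otimes>\<^bsub>G\<^esub> v \<noteq> v \<otimes>\<^bsub>G\<^esub> u"
    have su: "star u \<in> carrier G" "star (star u) = u" and sv: "star v \<in> carrier G" "star (star v) = v" using h sc ss by auto
    have h': "star u \<in> carrier G" "star (star u) \<noteq> star u" using su h by auto
    have K0: "star v \<otimes>\<^bsub>G\<^esub> star u = u \<otimes>\<^bsub>G\<^esub> star v"
      using arg_cong[OF H, of star] sm h su by (simp add: ss)
    have "star u \<otimes>\<^bsub>G\<^esub> v \<noteq> v \<otimes>\<^bsub>G\<^esub> star u"
    proof
      assume "star u \<otimes>\<^bsub>G\<^esub> v = v \<otimes>\<^bsub>G\<^esub> star u"
      then have "star u \<otimes>\<^bsub>G\<^esub> v = u \<otimes>\<^bsub>G\<^esub> v" using H by simp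
      then show False using h su by simp
    qed
    then have K: "star u \<otimes>\<^bsub>G\<^esub> v = u \<otimes>\<^bsub>G\<^esub> star v"
      using I[OF h' h(3,4)] n K0 su by auto
    have a1: "v \<otimes>\<^bsub>G\<^esub> u \<noteq> u \<otimes>\<^bsub>G\<^esub> v" using H h su by auto
    have a2: "v \<otimes>\<^bsub>G\<^esub> u \<noteq> u \<otimes>\<^bsub>G\<^esub> star v" using K n by auto
    have a3: "v \<otimes>\<^bsub>G\<^esub> u \<noteq> star u \<otimes>\<^bsub>G\<^esub> v" using n by auto
    have a5: "v \<otimes>\<^bsub>G\<^esub> u \<noteq> v \<otimes>\<^bsub>G\<^esub> star u" using h su by auto
    have a6: "v \<otimes>\<^bsub>G\<^esub> u \<noteq> star v \<otimes>\<^bsub>G\<^esub> u" using h sv by auto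
    have a7: "v \<otimes>\<^bsub>G\<^esub> u \<noteq> star v \<otimes>\<^bsub>G\<^esub> star u" using K0 a2 by auto
    note e1 = E[OF h(1-4) m_closed[OF h(3) h(1)]]
    have vu: "v \<otimes>\<^bsub>G\<^esub> u = star u \<otimes>\<^bsub>G\<^esub> star v"
    proof (rule ccontr)
      assume "v \<otimes>\<^bsub>G\<^esub> u \<noteq> star u \<otimes>\<^bsub>G\<^esub> star v"
      then show False using e1 a1 a2 a3 a5 a6 a7 one0 by simp
    qed
    have st: "1 + \<sigma> u * \<sigma> v = 0" using e1 a1 a2 a3 a5 a6 a7 vu by (simp add: algebra_simps)
    have b2: "star v \<otimes>\<^bsub>G\<^esub> u \<noteq> u \<otimes>\<^bsub>G\<^esub> star v"
    proof
      assume "star v \<otimes>\<^bsub>G\<^esub> u = u \<otimes>\<^bsub>G\<^esub> star v"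
      then have "star v \<otimes>\<^bsub>G\<^esub> u = star v \<otimes>\<^bsub>G\<^esub> star u" using K0 by simp
      then show False using h su sv by simp
    qed
    have b3: "star v \<otimes>\<^bsub>G\<^esub> u \<noteq> star u \<otimes>\<^bsub>G\<^esub> v" using b2 K by auto
    have b4: "star v \<otimes>\<^bsub>G\<^esub> u \<noteq> star u \<otimes>\<^bsub>G\<^esub> star v" using vu a6 by auto
    have b5: "star v \<otimes>\<^bsub>G\<^esub> u \<noteq> v \<otimes>\<^bsub>G\<^esub> u" using a6 by auto
    have b7: "star v \<otimes>\<^bsub>G\<^esub> u \<noteq> star v \<otimes>\<^bsub>G\<^esub> star u" using h su sv by auto
    note e2 = E[OF h(1-4) m_closed[OF sv(1) h(1)]]
    have vsu: "star v \<otimes>\<^bsub>G\<^esub> u = u \<otimes>\<^bsub>G\<^esub> v"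
    proof (rule ccontr)
      assume c: "star v \<otimes>\<^bsub>G\<^esub> u \<noteq> u \<otimes>\<^bsub>G\<^esub> v"
      then have c': "star v \<otimes>\<^bsub>G\<^esub> u \<noteq> v \<otimes>\<^bsub>G\<^esub> star u" using H by auto
      have "\<sigma> v = 0" using e2 c c' b2 b3 b4 b5 b7 by simp
      then show False using unz h by auto
    qed
    have c2: "u \<otimes>\<^bsub>G\<^esub> v \<noteq> u \<otimes>\<^bsub>G\<^esub> star v" using h sv by auto
    have c3: "u \<otimes>\<^bsub>G\<^esub> v \<noteq> star u \<otimes>\<^bsub>G\<^esub> v" using h su by auto
    have c4: "u \<otimes>\<^bsub>G\<^esub> v \<noteq> star u \<otimes>\<^bsub>G\<^esub> star v" using vu a1 by auto
    have c5: "u \<otimes>\<^bsub>G\<^esub> v \<noteq> v \<otimes>\<^bsub>G\<^esub> u" using a1 by auto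
    have c8: "u \<otimes>\<^bsub>G\<^esub> v \<noteq> star v \<otimes>\<^bsub>G\<^esub> star u" using K0 c2 by auto
    note e3 = E[OF h(1-4) m_closed[OF h(1) h(3)]]
    have H': "(u \<otimes>\<^bsub>G\<^esub> v = v \<otimes>\<^bsub>G\<^esub> star u) = True" "(u \<otimes>\<^bsub>G\<^esub> v = star v \<otimes>\<^bsub>G\<^esub> u) = True"
      using H vsu by auto
    have sum: "1 + \<sigma> u + \<sigma> v = 0" using e3 c2 c3 c4 c5 c8 by (simp only: H' if_True if_False) (simp add: algebra_simps)
    have "\<sigma> u * \<sigma> v = \<sigma> v * \<sigma> (star u)" using arg_cong[OF H, of \<sigma>] sh h su by simp
    moreover obtain k where k: "1 = \<sigma> v * k" using \<sigma>_unit h(3) by (meson dvdE)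
    ultimately have "\<sigma> u * (\<sigma> v * k) = \<sigma> (star u) * (\<sigma> v * k)"
      by (metis mult.assoc mult.commute)
    then have "\<sigma> u = \<sigma> (star u)" using k by simp
    then have ss1: "\<sigma> u * \<sigma> u = 1" using cp[OF h(1)] by metis
    have "\<sigma> u * (1 + \<sigma> u + \<sigma> v) = \<sigma> u + \<sigma> u * \<sigma> u + \<sigma> u * \<sigma> v" by (simp add: algebra_simps)
    also have "\<dots> = \<sigma> u" using ss1 st by (simp add: algebra_simps)
    finally have "\<sigma> u = 0" using sum by simp
    then show False using unz h by auto
  qed
  have sxy: "star (x \<otimes>\<^bsub>G\<^esub> y) = star y \<otimes>\<^bsub>G\<^esub> star x" using sm x y by blast
  have syx: "star (y \<otimes>\<^bsub>G\<^esub> x) = star x \<otimes>\<^bsub>G\<^esub> star y" using sm x y by blast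
  have d1: "x \<otimes>\<^bsub>G\<^esub> y \<noteq> x \<otimes>\<^bsub>G\<^esub> star y" using x y ys by simp
  have d2: "x \<otimes>\<^bsub>G\<^esub> y \<noteq> star x \<otimes>\<^bsub>G\<^esub> y" using x y xs by simp
  note e = E[OF x y m_closed[OF x(1) y(1)]]
  have part1: "x \<otimes>\<^bsub>G\<^esub> y \<in> {y \<otimes>\<^bsub>G\<^esub> x, y \<otimes>\<^bsub>G\<^esub> star x, star y \<otimes>\<^bsub>G\<^esub> x, star x \<otimes>\<^bsub>G\<^esub> star y}"
    using I[OF x y] by blast
  have part2a: "star (x \<otimes>\<^bsub>G\<^esub> y) = x \<otimes>\<^bsub>G\<^esub> y" if c: "x \<otimes>\<^bsub>G\<^esub> y = y \<otimes>\<^bsub>G\<^esub> x"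
  proof (rule ccontr)
    assume nn: "star (x \<otimes>\<^bsub>G\<^esub> y) \<noteq> x \<otimes>\<^bsub>G\<^esub> y"
    have f1: "x \<otimes>\<^bsub>G\<^esub> y \<noteq> star y \<otimes>\<^bsub>G\<^esub> star x" using nn sxy by simp
    have "star x \<otimes>\<^bsub>G\<^esub> star y = star (x \<otimes>\<^bsub>G\<^esub> y)" using syx c by simp
    then have f2: "x \<otimes>\<^bsub>G\<^esub> y \<noteq> star x \<otimes>\<^bsub>G\<^esub> star y" using nn by simp
    have f3: "x \<otimes>\<^bsub>G\<^esub> y \<noteq> y \<otimes>\<^bsub>G\<^esub> star x" using c x y xs by simp
    have f4: "x \<otimes>\<^bsub>G\<^esub> y \<noteq> star y \<otimes>\<^bsub>G\<^esub> x" using c x y ys by simp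
    have c': "(x \<otimes>\<^bsub>G\<^esub> y = y \<otimes>\<^bsub>G\<^esub> x) = True" using c by simp
    have "1 + 1 = (0::'r)" using e by (simp only: c' d1 d2 f1 f2 f3 f4 if_True if_False) simp
    then show False using char by simp
  qed
  have part2b: "x \<otimes>\<^bsub>G\<^esub> y = y \<otimes>\<^bsub>G\<^esub> x" if c: "star (x \<otimes>\<^bsub>G\<^esub> y) = x \<otimes>\<^bsub>G\<^esub> y"
  proof (rule ccontr)
    assume nn: "x \<otimes>\<^bsub>G\<^esub> y \<noteq> y \<otimes>\<^bsub>G\<^esub> x"
    have c1: "star y \<otimes>\<^bsub>G\<^esub> star x = x \<otimes>\<^bsub>G\<^esub> y" using c sxy by simp
    have f3: "x \<otimes>\<^bsub>G\<^esub> y \<noteq> y \<otimes>\<^bsub>G\<^esub> star x"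
    proof
      assume "x \<otimes>\<^bsub>G\<^esub> y = y \<otimes>\<^bsub>G\<^esub> star x"
      then have "star y \<otimes>\<^bsub>G\<^esub> star x = y \<otimes>\<^bsub>G\<^esub> star x" using c1 by simp
      then show False using y ys xs by simp
    qed
    have f4: "x \<otimes>\<^bsub>G\<^esub> y \<noteq> star y \<otimes>\<^bsub>G\<^esub> x"
    proof
      assume "x \<otimes>\<^bsub>G\<^esub> y = star y \<otimes>\<^bsub>G\<^esub> x"
      then have "star y \<otimes>\<^bsub>G\<^esub> star x = star y \<otimes>\<^bsub>G\<^esub> x" using c1 by simp
      then show False using x ys xs by simp
    qed
    have c2: "x \<otimes>\<^bsub>G\<^esub> y = star x \<otimes>\<^bsub>G\<^esub> star y" using I[OF x y] nn f3 f4 by blast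
    have t1: "(x \<otimes>\<^bsub>G\<^esub> y = star x \<otimes>\<^bsub>G\<^esub> star y) = True" "(x \<otimes>\<^bsub>G\<^esub> y = star y \<otimes>\<^bsub>G\<^esub> star x) = True"
      using c1 c2 by simp_all
    have "1 + \<sigma> x * \<sigma> y + \<sigma> y * \<sigma> x = 0" using e
      by (simp only: t1 nn d1 d2 f3 f4 if_True if_False) (simp add: algebra_simps)
    then have "2 * (1 + 2 * (\<sigma> x * \<sigma> y)) = 0" by (simp add: algebra_simps)
    moreover have "2 * (1 + 2 * (\<sigma> x * \<sigma> y)) = 2 + 4 * (\<sigma> x * \<sigma> y)" by (simp add: algebra_simps)
    ultimately have "(2::'r) = 0" using four by simp
    then show False using char by simp
  qed
  have part3: "x \<otimes>\<^bsub>G\<^esub> y = y \<otimes>\<^bsub>G\<^esub> star x \<longleftrightarrow> star x \<otimes>\<^bsub>G\<^esub> y = y \<otimes>\<^bsub>G\<^esub> x"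
  proof
    assume "x \<otimes>\<^bsub>G\<^esub> y = y \<otimes>\<^bsub>G\<^esub> star x"
    then show "star x \<otimes>\<^bsub>G\<^esub> y = y \<otimes>\<^bsub>G\<^esub> x" using III[OF x y] by blast
  next
    assume a: "star x \<otimes>\<^bsub>G\<^esub> y = y \<otimes>\<^bsub>G\<^esub> x"
    have h': "star x \<in> carrier G" "star (star x) \<noteq> star x" using xs x by auto
    have "star x \<otimes>\<^bsub>G\<^esub> y = y \<otimes>\<^bsub>G\<^esub> star (star x)" using a xs by simp
    from III[OF h' y this] show "x \<otimes>\<^bsub>G\<^esub> y = y \<otimes>\<^bsub>G\<^esub> star x" using xs by simp
  qed
  show ?thesis using part1 part2a part2b part3 by blast
qed

end
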